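(* For every countably infinite algebraically closed group $K$, the isomorphism class $\{G\in\mathcal G:\ \overline G\cong K\}$ is dense in $\mathcal G$.
   Context: Let $\mathbb N=\{1,2,3,\dots\}$. Equip $\mathbb N^{\mathbb N\times\mathbb N}$ with the product topology of the discrete topology on $\mathbb N$. Let $\mathcal G$ be the subspace consisting of those $A\in\mathbb N^{\mathbb N\times\mathbb N}$ that are the multiplication table of a group on the underlying set $\mathbb N$ whose identity element is $1$. For $G\in\mathcal G$, $\overline G$ denotes the group on $\mathbb N$ with multiplication table $G$. A group $K$ is algebraically closed if every finite system of equations and inequations (words in variables $x_1,x_2,\dots$ with constants from $K$, i.e. elements of the free product of the free group on the variables with $K$) that has a solution in some group containing $K$ already has a solution in $K$. *)

theory Defs
  imports "HOL-Analysis.Analysis" "HOL-Algebra.Group"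
begin

definition Npos :: "nat set" where "Npos = {1..}"

definition tbl_group :: "(nat \<times> nat \<Rightarrow> nat) \<Rightarrow> nat monoid" where
  "tbl_group A = \<lparr>carrier = Npos, mult = (\<lambda>x y. A (x, y)), one = 1\<rparr>"

definition table_top :: "(nat \<times> nat \<Rightarrow> nat) topology" where
  "table_top = product_topology (\<lambda>_. discrete_topology Npos) (Npos \<times> Npos)"

definition Gspace :: "(nat \<times> nat \<Rightarrow> nat) set" where
  "Gspace = {A \<in> topspace table_top. group (tbl_group A)}"

text \<open>Words in variables x_i (Inl i) and constants (Inr k), each letter with an
  inversion flag (True = inverse). These represent elements of F(X) * K.\<close>
type_synonym 'a word = "((nat + 'a) \<times> bool) list"

definition gpow1 :: "('b, 'm) monoid_scheme \<Rightarrow> 'b \<Rightarrow> bool \<Rightarrow> 'b" where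
  "gpow1 H x e = (if e then inv\<^bsub>H\<^esub> x else x)"

fun eval_word :: "('b, 'm) monoid_scheme \<Rightarrow> ('a \<Rightarrow> 'b) \<Rightarrow> (nat \<Rightarrow> 'b) \<Rightarrow> 'a word \<Rightarrow> 'b" where
  "eval_word H h s [] = \<one>\<^bsub>H\<^esub>"
| "eval_word H h s ((l, e) # w) =
     gpow1 H (case l of Inl i \<Rightarrow> s i | Inr k \<Rightarrow> h k) e \<otimes>\<^bsub>H\<^esub> eval_word H h s w"

definition word_consts :: "'a word \<Rightarrow> 'a set" where
  "word_consts w = {k. \<exists>e. (Inr k, e) \<in> set w}"

definition solves :: "('b, 'm) monoid_scheme \<Rightarrow> ('a \<Rightarrow> 'b) \<Rightarrow> (nat \<Rightarrow> 'b)
    \<Rightarrow> 'a word list \<Rightarrow> 'a word list \<Rightarrow> bool" where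
  "solves H h s eqs neqs \<longleftrightarrow>
     (\<forall>i. s i \<in> carrier H) \<and>
     (\<forall>w\<in>set eqs. eval_word H h s w = \<one>\<^bsub>H\<^esub>) \<and>
     (\<forall>w\<in>set neqs. eval_word H h s w \<noteq> \<one>\<^bsub>H\<^esub>)"

text \<open>Overgroups (groups containing K, i.e. with an
  injective homomorphism from K) are taken with carrier in the type 'a + nat, which
  has room for every group generated by K and finitely many further elements.\<close>
definition alg_closed :: "'a monoid \<Rightarrow> bool" where
  "alg_closed K \<longleftrightarrow> group K \<and>
     (\<forall>(eqs :: 'a word list) neqs.
        (\<forall>w \<in> set eqs \<union> set neqs. word_consts w \<subseteq> carrier K) \<longrightarrow>
        (\<exists>(H :: ('a + nat) monoid) h s. group H \<and> h \<in> hom K H \<and>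
             inj_on h (carrier K) \<and> solves H h s eqs neqs) \<longrightarrow>
        (\<exists>s. solves K id s eqs neqs))"

end

theory Submission imports Defs begin

lemma transport_group:
  fixes P :: "('b,'c) monoid_scheme" and H :: "('d,'e) monoid_scheme"
  assumes gP: "group P" and bij: "bij_betw f (carrier P) C" and cH: "carrier H = C"
    and oH: "one H = f \<one>\<^bsub>P\<^esub>"
    and mH: "\<And>x y. x \<in> C \<Longrightarrow> y \<in> C \<Longrightarrow> x \<otimes>\<^bsub>H\<^esub> y = f (inv_into (carrier P) f x \<otimes>\<^bsub>P\<^esub> inv_into (carrier P) f y)"
  shows "group H \<and> f \<in> iso P H"
proof -
  interpret P: group P by fact
  let ?g = "inv_into (carrier P) f"
  have inj: "inj_on f (carrier P)" and im: "f ` carrier P = C" using bij by (auto simp: bij_betw_def)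
  have gf: "\<And>x. x \<in> carrier P \<Longrightarrow> ?g (f x) = x" using inj by (rule inv_into_f_f)
  have fC: "\<And>x. x \<in> carrier P \<Longrightarrow> f x \<in> C" using im by blast
  have mf: "\<And>x y. x \<in> carrier P \<Longrightarrow> y \<in> carrier P \<Longrightarrow> f x \<otimes>\<^bsub>H\<^esub> f y = f (x \<otimes>\<^bsub>P\<^esub> y)"
  proof -
    fix x y assume a: "x \<in> carrier P" "y \<in> carrier P"
    have "f x \<otimes>\<^bsub>H\<^esub> f y = f (?g (f x) \<otimes>\<^bsub>P\<^esub> ?g (f y))" using mH fC a by blast
    then show "f x \<otimes>\<^bsub>H\<^esub> f y = f (x \<otimes>\<^bsub>P\<^esub> y)" using gf a by metis
  qed
  have ex: "\<And>x. x \<in> carrier H \<Longrightarrow> \<exists>x'\<in>carrier P. x = f x'" using cH im by blast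
  have grp: "group H"
  proof (rule groupI)
    fix x y assume "x \<in> carrier H" "y \<in> carrier H"
    then obtain x' y' where "x' \<in> carrier P" "y' \<in> carrier P" "x = f x'" "y = f y'" using ex by metis
    then show "x \<otimes>\<^bsub>H\<^esub> y \<in> carrier H" using mf fC cH P.m_closed by metis
  next
    show "\<one>\<^bsub>H\<^esub> \<in> carrier H" using cH oH fC P.one_closed by metis
  next
    fix x y z assume a: "x \<in> carrier H" "y \<in> carrier H" "z \<in> carrier H"
    then obtain x' y' z' where b: "x' \<in> carrier P" "y' \<in> carrier P" "z' \<in> carrier P" "x = f x'" "y = f y'" "z = f z'"
      using ex by metis
    have "x \<otimes>\<^bsub>H\<^esub> y \<otimes>\<^bsub>H\<^esub> z = f (x' \<otimes>\<^bsub>P\<^esub> y' \<otimes>\<^bsub>P\<^esub> z')" using b mf P.m_closed by metis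
    also have "\<dots> = f (x' \<otimes>\<^bsub>P\<^esub> (y' \<otimes>\<^bsub>P\<^esub> z'))" using b P.m_assoc by metis
    also have "\<dots> = x \<otimes>\<^bsub>H\<^esub> (y \<otimes>\<^bsub>H\<^esub> z)" using b mf P.m_closed by metis
    finally show "x \<otimes>\<^bsub>H\<^esub> y \<otimes>\<^bsub>H\<^esub> z = x \<otimes>\<^bsub>H\<^esub> (y \<otimes>\<^bsub>H\<^esub> z)" .
  next
    fix x assume "x \<in> carrier H"
    then obtain x' where b: "x' \<in> carrier P" "x = f x'" using ex by metis
    show "\<one>\<^bsub>H\<^esub> \<otimes>\<^bsub>H\<^esub> x = x" using b mf oH P.one_closed P.l_one by metis
  next
    fix x assume "x \<in> carrier H"
    then obtain x' where b: "x' \<in> carrier P" "x = f x'" using ex by metis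
    have "f (inv\<^bsub>P\<^esub> x') \<in> carrier H" using b fC cH P.inv_closed by metis
    moreover have "f (inv\<^bsub>P\<^esub> x') \<otimes>\<^bsub>H\<^esub> x = \<one>\<^bsub>H\<^esub>" using b mf oH P.inv_closed P.l_inv by metis
    ultimately show "\<exists>y\<in>carrier H. y \<otimes>\<^bsub>H\<^esub> x = \<one>\<^bsub>H\<^esub>" by blast
  qed
  have "f \<in> hom P H" unfolding hom_def using fC cH mf by auto
  then show ?thesis using grp bij cH by (simp add: iso_def)
qed

lemma w1: "group H \<Longrightarrow> u \<in> carrier H \<Longrightarrow> (u \<otimes>\<^bsub>H\<^esub> \<one>\<^bsub>H\<^esub> = \<one>\<^bsub>H\<^esub>) \<longleftrightarrow> u = \<one>\<^bsub>H\<^esub>"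
  by (simp add: group.is_monoid)

lemma w2: assumes "group H" "u \<in> carrier H" "v \<in> carrier H"
  shows "(u \<otimes>\<^bsub>H\<^esub> (inv\<^bsub>H\<^esub> v \<otimes>\<^bsub>H\<^esub> \<one>\<^bsub>H\<^esub>) = \<one>\<^bsub>H\<^esub>) \<longleftrightarrow> u = v"
  using assms by (simp add: group.is_monoid group.inv_closed group.r_inv group.inv_equality[symmetric]
     group.inv_inv) (metis group.inv_equality group.inv_inv group.inv_closed group.l_inv group.r_inv)

lemma w3: assumes "group H" "u \<in> carrier H" "v \<in> carrier H" "w \<in> carrier H"
  shows "(u \<otimes>\<^bsub>H\<^esub> (v \<otimes>\<^bsub>H\<^esub> (inv\<^bsub>H\<^esub> w \<otimes>\<^bsub>H\<^esub> \<one>\<^bsub>H\<^esub>)) = \<one>\<^bsub>H\<^esub>) \<longleftrightarrow> u \<otimes>\<^bsub>H\<^esub> v = w"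
proof -
  have "u \<otimes>\<^bsub>H\<^esub> (v \<otimes>\<^bsub>H\<^esub> (inv\<^bsub>H\<^esub> w \<otimes>\<^bsub>H\<^esub> \<one>\<^bsub>H\<^esub>)) = (u \<otimes>\<^bsub>H\<^esub> v) \<otimes>\<^bsub>H\<^esub> (inv\<^bsub>H\<^esub> w \<otimes>\<^bsub>H\<^esub> \<one>\<^bsub>H\<^esub>)"
    using assms by (simp add: group.is_monoid group.inv_closed monoid.m_assoc)
  then show ?thesis using w2[OF assms(1) _ assms(4), of "u \<otimes>\<^bsub>H\<^esub> v"] assms by (simp add: group.is_monoid monoid.m_closed)
qed

lemma Gspace_vals:
  assumes "G \<in> Gspace" "a \<in> Npos" "b \<in> Npos" shows "G (a,b) \<in> Npos"
  using assms unfolding Gspace_def table_top_def by (auto simp: PiE_iff)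

lemma partial_embed:
  fixes K :: "'a monoid"
  assumes ac: "alg_closed K" and cK: "countable (carrier K)"
    and G: "G \<in> Gspace" and fF: "finite F" and FN: "F \<subseteq> Npos \<times> Npos"
    and S_def: "S = insert 1 (fst ` F \<union> snd ` F \<union> G ` F)"
  shows "\<exists>s. (\<forall>n. s n \<in> carrier K) \<and> s 1 = \<one>\<^bsub>K\<^esub> \<and> inj_on s S \<and>
             (\<forall>p\<in>F. s (fst p) \<otimes>\<^bsub>K\<^esub> s (snd p) = s (G p))"
proof -
  have gK: "group K" using ac by (simp add: alg_closed_def)
  have gG: "group (tbl_group G)" using G by (simp add: Gspace_def)
  have fS: "finite S" using fF S_def by simp
  have SN: "S \<subseteq> Npos" using FN G S_def Gspace_vals by (force simp: Npos_def)
  obtain lF where lF: "set lF = F" using fF finite_list by blast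
  have fN: "finite {(a,b). a \<in> S \<and> b \<in> S \<and> a \<noteq> b}"
    by (rule finite_subset[of _ "S \<times> S"]) (use fS in auto)
  obtain lN where lN: "set lN = {(a,b). a \<in> S \<and> b \<in> S \<and> a \<noteq> b}"
    using finite_list[OF fN] by blast
  define eqs :: "'a word list" where
    "eqs = [(Inl 1, False)] # map (\<lambda>p. [(Inl (fst p),False),(Inl (snd p),False),(Inl (G p),True)]) lF"
  define neqs :: "'a word list" where
    "neqs = map (\<lambda>p. [(Inl (fst p),False),(Inl (snd p),True)]) lN"
  have wcs: "\<forall>w \<in> set eqs \<union> set neqs. word_consts w \<subseteq> carrier K"
    by (auto simp: eqs_def neqs_def word_consts_def)
  define P where "P = tbl_group G \<times>\<times> K"
  have gP: "group P" unfolding P_def using gG gK by (simp add: DirProd_group)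
  have cP: "carrier P = Npos \<times> carrier K" by (simp add: P_def tbl_group_def)
  have ctP: "countable (carrier P)" using cK cP by simp
  define f :: "nat \<times> 'a \<Rightarrow> 'a + nat" where "f = (\<lambda>p. Inr (to_nat_on (carrier P) p))"
  have injf: "inj_on f (carrier P)" using inj_on_to_nat_on[OF ctP] unfolding f_def inj_on_def by auto
  define H :: "('a + nat) monoid" where
    "H = \<lparr>carrier = f ` carrier P,
          mult = (\<lambda>x y. f (inv_into (carrier P) f x \<otimes>\<^bsub>P\<^esub> inv_into (carrier P) f y)),
          one = f \<one>\<^bsub>P\<^esub>\<rparr>"
  have tr: "group H \<and> f \<in> iso P H"
    by (rule transport_group[OF gP]) (use injf in \<open>auto simp: H_def inj_on_imp_bij_betw\<close>)
  then have gH: "group H" and fiso: "f \<in> iso P H" by auto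
  have fhom: "f \<in> hom P H" using fiso by (simp add: iso_def)
  have oneP: "\<one>\<^bsub>P\<^esub> = (1, \<one>\<^bsub>K\<^esub>)" by (simp add: P_def tbl_group_def)
  have oneH: "\<one>\<^bsub>H\<^esub> = f (1, \<one>\<^bsub>K\<^esub>)" by (simp add: H_def oneP)
  have one1: "G (1,1) = 1"
  proof -
    interpret group "tbl_group G" by fact
    have "\<one>\<^bsub>tbl_group G\<^esub> \<otimes>\<^bsub>tbl_group G\<^esub> \<one>\<^bsub>tbl_group G\<^esub> = \<one>\<^bsub>tbl_group G\<^esub>" by simp
    then show ?thesis by (simp add: tbl_group_def)
  qed
  have fC: "\<And>p. p \<in> carrier P \<Longrightarrow> f p \<in> carrier H" using fhom unfolding hom_def Pi_def by blast
  have fm: "\<And>p q. p \<in> carrier P \<Longrightarrow> q \<in> carrier P \<Longrightarrow> f p \<otimes>\<^bsub>H\<^esub> f q = f (p \<otimes>\<^bsub>P\<^esub> q)"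
    using hom_mult[OF fhom] by simp
  have N1: "(1::nat) \<in> Npos" by (simp add: Npos_def)
  define h where "h = (\<lambda>k. f (1, k))"
  define sH where "sH = (\<lambda>i. f (if i \<in> Npos then (i, \<one>\<^bsub>K\<^esub>) else (1, \<one>\<^bsub>K\<^esub>)))"
  have hhom: "h \<in> hom K H"
  proof -
    have "h \<in> carrier K \<rightarrow> carrier H" using fC cP N1 by (auto simp: h_def)
    moreover have "h (x \<otimes>\<^bsub>K\<^esub> y) = h x \<otimes>\<^bsub>H\<^esub> h y" if "x \<in> carrier K" "y \<in> carrier K" for x y
      using that fm[of "(1,x)" "(1,y)"] cP N1 one1 by (simp add: h_def P_def tbl_group_def)
    ultimately show ?thesis by (simp add: hom_def)
  qed
  have hinj: "inj_on h (carrier K)" using injf cP N1 by (auto simp: h_def inj_on_def)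
  have sHC: "sH i \<in> carrier H" for i using fC cP N1 gK by (simp add: sH_def group.is_monoid)
  have sol: "solves H h sH eqs neqs"
    unfolding solves_def
  proof (intro conjI ballI allI)
    fix i show "sH i \<in> carrier H" by (rule sHC)
  next
    fix w assume "w \<in> set eqs"
    then consider "w = [(Inl 1, False)]" | p where "p \<in> F" "w = [(Inl (fst p),False),(Inl (snd p),False),(Inl (G p),True)]"
      unfolding eqs_def using lF by auto
    then show "eval_word H h sH w = \<one>\<^bsub>H\<^esub>"
    proof cases
      case 1
      have "sH 1 = \<one>\<^bsub>H\<^esub>" using N1 by (simp add: sH_def oneH)
      then show ?thesis using 1 gH by (simp add: gpow1_def group.is_monoid)
    next
      case (2 p)
      obtain a b where p: "p = (a,b)" by force
      have ab: "a \<in> Npos" "b \<in> Npos" using 2 FN p by auto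
      have c: "G (a,b) \<in> Npos" using Gspace_vals[OF G ab] .
      have "sH a \<otimes>\<^bsub>H\<^esub> sH b = sH (G (a,b))"
        using ab c fm[of "(a, \<one>\<^bsub>K\<^esub>)" "(b, \<one>\<^bsub>K\<^esub>)"] cP gK
        by (simp add: sH_def P_def tbl_group_def group.is_monoid)
      then show ?thesis using 2 p w3[OF gH sHC sHC sHC] by (simp add: gpow1_def)
    qed
  next
    fix w assume "w \<in> set neqs"
    then obtain a b where w: "w = [(Inl a,False),(Inl b,True)]" "a \<in> S" "b \<in> S" "a \<noteq> b"
      unfolding neqs_def using lN by auto
    have oK: "\<one>\<^bsub>K\<^esub> \<in> carrier K" using monoid.one_closed[OF group.is_monoid[OF gK]] .
    have ab: "a \<in> Npos" "b \<in> Npos" using w SN by auto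
    have "(a, \<one>\<^bsub>K\<^esub>) \<in> carrier P" "(b, \<one>\<^bsub>K\<^esub>) \<in> carrier P" using ab oK cP by auto
    then have "f (a, \<one>\<^bsub>K\<^esub>) \<noteq> f (b, \<one>\<^bsub>K\<^esub>)" using inj_onD[OF injf] w(4) by blast
    then have "sH a \<noteq> sH b" using ab by (simp add: sH_def)
    then show "eval_word H h sH w \<noteq> \<one>\<^bsub>H\<^esub>" using w w2[OF gH sHC sHC] by (simp add: gpow1_def)
  qed
  obtain s where s: "solves K id s eqs neqs"
    using ac wcs gH hhom hinj sol unfolding alg_closed_def by blast
  have sC: "\<forall>n. s n \<in> carrier K" using s by (simp add: solves_def)
  have s1: "s 1 = \<one>\<^bsub>K\<^esub>" using s w1[OF gK] sC by (simp add: solves_def eqs_def gpow1_def)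
  have sm: "\<forall>p\<in>F. s (fst p) \<otimes>\<^bsub>K\<^esub> s (snd p) = s (G p)"
  proof
    fix p assume "p \<in> F"
    then have "p \<in> set lF" using lF by simp
    then have "[(Inl (fst p),False),(Inl (snd p),False),(Inl (G p),True)] \<in> set eqs" unfolding eqs_def by force
    then have "eval_word K id s [(Inl (fst p),False),(Inl (snd p),False),(Inl (G p),True)] = \<one>\<^bsub>K\<^esub>"
      using s unfolding solves_def by blast
    then show "s (fst p) \<otimes>\<^bsub>K\<^esub> s (snd p) = s (G p)" using w3[OF gK] sC by (simp add: gpow1_def)
  qed
  have sinj: "inj_on s S"
  proof (rule inj_onI, rule ccontr)
    fix a b assume "a \<in> S" "b \<in> S" "s a = s b" "a \<noteq> b"
    then have "(a,b) \<in> set lN" using lN by simp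
    then have "[(Inl a,False),(Inl b,True)] \<in> set neqs" unfolding neqs_def by force
    then have "eval_word K id s [(Inl a,False),(Inl b,True)] \<noteq> \<one>\<^bsub>K\<^esub>"
      using s unfolding solves_def by blast
    then show False using w2[OF gK] sC \<open>s a = s b\<close> by (simp add: gpow1_def)
  qed
  show ?thesis using sC s1 sm sinj by blast
qed


lemma extend_bij:
  fixes K :: "'a monoid"
  assumes cK: "countable (carrier K)" and iK: "infinite (carrier K)"
    and fS: "finite S" and SN: "S \<subseteq> Npos"
    and sC: "\<forall>n. s n \<in> carrier K" and sinj: "inj_on s S"
  shows "\<exists>\<beta>. bij_betw \<beta> Npos (carrier K) \<and> (\<forall>x\<in>S. \<beta> x = s x)"
proof -
  define T1 where "T1 = Npos - S"
  define T2 where "T2 = carrier K - s ` S"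
  have iN: "infinite Npos" unfolding Npos_def using infinite_Ici[of "1::nat"] .
  have i1: "infinite T1" unfolding T1_def using iN fS by (simp add: Diff_infinite_finite)
  have i2: "infinite T2" unfolding T2_def using iK fS by (simp add: Diff_infinite_finite)
  have c1: "countable T1" by simp
  have c2: "countable T2" unfolding T2_def using cK by simp
  define b0 where "b0 = from_nat_into T2 \<circ> to_nat_on T1"
  have b0: "bij_betw b0 T1 T2" unfolding b0_def
    by (rule bij_betw_trans[OF to_nat_on_infinite[OF c1 i1] bij_betw_from_nat_into[OF c2 i2]])
  define \<beta> where "\<beta> = (\<lambda>x. if x \<in> S then s x else b0 x)"
  have bS: "bij_betw \<beta> S (s ` S)"
    using inj_on_imp_bij_betw[OF sinj] by (rule bij_betw_cong[THEN iffD1, rotated]) (simp add: \<beta>_def)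
  have bT: "bij_betw \<beta> T1 T2"
    using b0 by (rule bij_betw_cong[THEN iffD1, rotated]) (simp add: \<beta>_def T1_def)
  have "bij_betw \<beta> (S \<union> T1) (s ` S \<union> T2)"
    by (rule bij_betw_combine[OF bS bT]) (auto simp: T2_def)
  moreover have "S \<union> T1 = Npos" using SN by (auto simp: T1_def)
  moreover have "s ` S \<union> T2 = carrier K" using sC by (auto simp: T2_def)
  ultimately show ?thesis by (auto simp: \<beta>_def)
qed

lemma build_table:
  fixes K :: "'a monoid"
  assumes gK: "group K" and bij: "bij_betw \<beta> Npos (carrier K)" and b1: "\<beta> 1 = \<one>\<^bsub>K\<^esub>"
  defines "A \<equiv> (\<lambda>p. if p \<in> Npos \<times> Npos then inv_into Npos \<beta> (\<beta> (fst p) \<otimes>\<^bsub>K\<^esub> \<beta> (snd p)) else undefined)"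
  shows "A \<in> Gspace \<and> tbl_group A \<cong> K"
proof -
  let ?g = "inv_into Npos \<beta>"
  have bg: "bij_betw ?g (carrier K) Npos" using bij by (rule bij_betw_inv_into)
  have N1: "(1::nat) \<in> Npos" by (simp add: Npos_def)
  have g1: "?g \<one>\<^bsub>K\<^esub> = 1" using b1 N1 bij by (metis bij_betw_inv_into_left)
  have bC: "\<And>x. x \<in> Npos \<Longrightarrow> \<beta> x \<in> carrier K" using bij by (meson bij_betwE)
  have gC: "\<And>y. y \<in> carrier K \<Longrightarrow> ?g y \<in> Npos" using bg by (meson bij_betwE)
  have tr: "group (tbl_group A) \<and> ?g \<in> iso K (tbl_group A)"
  proof (rule transport_group[OF gK bg])
    show "carrier (tbl_group A) = Npos" by (simp add: tbl_group_def)
    show "\<one>\<^bsub>tbl_group A\<^esub> = ?g \<one>\<^bsub>K\<^esub>" using g1 by (simp add: tbl_group_def)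
    fix x y assume "x \<in> Npos" "y \<in> Npos"
    then show "x \<otimes>\<^bsub>tbl_group A\<^esub> y = ?g (inv_into (carrier K) ?g x \<otimes>\<^bsub>K\<^esub> inv_into (carrier K) ?g y)"
      using inv_into_inv_into_eq[OF bij] by (simp add: tbl_group_def A_def)
  qed
  have "A \<in> topspace table_top"
    unfolding table_top_def using gC bC gK
    by (auto simp: A_def PiE_iff extensional_def group.is_monoid monoid.m_closed)
  then have "A \<in> Gspace" using tr by (simp add: Gspace_def)
  moreover have "K \<cong> tbl_group A" using tr by (auto simp: is_iso_def)
  then have "tbl_group A \<cong> K" using gK by (simp add: group.iso_sym)
  ultimately show ?thesis by simp
qed


lemma core:
  fixes K :: "'a monoid"
  assumes ac: "alg_closed K" and cK: "countable (carrier K)" and iK: "infinite (carrier K)"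
    and G: "G \<in> Gspace" and fF: "finite F" and FN: "F \<subseteq> Npos \<times> Npos"
  shows "\<exists>A\<in>Gspace. tbl_group A \<cong> K \<and> (\<forall>i\<in>F. A i = G i)"
proof -
  have gK: "group K" using ac by (simp add: alg_closed_def)
  define S where "S = insert 1 (fst ` F \<union> snd ` F \<union> G ` F)"
  obtain s where sC: "\<forall>n. s n \<in> carrier K" and s1: "s 1 = \<one>\<^bsub>K\<^esub>" and sinj: "inj_on s S"
    and sm: "\<forall>p\<in>F. s (fst p) \<otimes>\<^bsub>K\<^esub> s (snd p) = s (G p)"
    using partial_embed[OF ac cK G fF FN S_def] by blast
  have fS: "finite S" using fF S_def by simp
  have SN: "S \<subseteq> Npos" using FN G S_def Gspace_vals by (force simp: Npos_def)
  obtain \<beta> where bij: "bij_betw \<beta> Npos (carrier K)" and bS: "\<forall>x\<in>S. \<beta> x = s x"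
    using extend_bij[OF cK iK fS SN sC sinj] by blast
  have b1: "\<beta> 1 = \<one>\<^bsub>K\<^esub>" using bS s1 by (simp add: S_def)
  define A where "A \<equiv> (\<lambda>p. if p \<in> Npos \<times> Npos then inv_into Npos \<beta> (\<beta> (fst p) \<otimes>\<^bsub>K\<^esub> \<beta> (snd p)) else undefined)"
  have AG: "A \<in> Gspace \<and> tbl_group A \<cong> K" using build_table[OF gK bij b1] unfolding A_def .
  have injb: "inj_on \<beta> Npos" using bij by (simp add: bij_betw_def)
  have "A p = G p" if p: "p \<in> F" for p
  proof -
    have inS: "fst p \<in> S" "snd p \<in> S" "G p \<in> S" using p by (auto simp: S_def)
    have "A p = inv_into Npos \<beta> (s (fst p) \<otimes>\<^bsub>K\<^esub> s (snd p))" using p FN inS bS by (auto simp: A_def)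
    also have "\<dots> = inv_into Npos \<beta> (\<beta> (G p))" using sm p inS bS by simp
    also have "\<dots> = G p" using injb inS SN by (simp add: inv_into_f_f subset_iff)
    finally show ?thesis .
  qed
  then show ?thesis using AG by blast
qed

theorem theorem6p5:
  fixes K :: "'a monoid"
  assumes "alg_closed K"
    and "countable (carrier K)"
    and "infinite (carrier K)"
  shows "(subtopology table_top Gspace) closure_of {A \<in> Gspace. tbl_group A \<cong> K} = Gspace"
proof -
  let ?I = "{A \<in> Gspace. tbl_group A \<cong> K}"
  have "Gspace \<subseteq> table_top closure_of (Gspace \<inter> ?I)"
  proof
    fix G assume G: "G \<in> Gspace"
    have Gt: "G \<in> topspace table_top" using G by (simp add: Gspace_def)
    show "G \<in> table_top closure_of (Gspace \<inter> ?I)"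
      unfolding in_closure_of
    proof (intro conjI allI impI Gt)
      fix T assume T: "G \<in> T \<and> openin table_top T"
      obtain X where X: "G \<in> (\<Pi>\<^sub>E i\<in>Npos \<times> Npos. X i)"
        "\<forall>i. openin (discrete_topology Npos) (X i)"
        "finite {i. X i \<noteq> topspace (discrete_topology Npos)}"
        "(\<Pi>\<^sub>E i\<in>Npos \<times> Npos. X i) \<subseteq> T"
        using product_topology_open_contains_basis[of "\<lambda>_. discrete_topology Npos" "Npos \<times> Npos" T G]
          T unfolding table_top_def by blast
      define F where "F = {i. X i \<noteq> Npos} \<inter> (Npos \<times> Npos)"
      have fF: "finite F" using X(3) by (simp add: F_def)
      obtain A where A: "A \<in> Gspace" "tbl_group A \<cong> K" "\<forall>i\<in>F. A i = G i"
        using core[OF assms G fF] by (auto simp: F_def)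
      have At: "A \<in> (\<Pi>\<^sub>E i\<in>Npos \<times> Npos. Npos)" using A(1) by (simp add: Gspace_def table_top_def)
      have "A \<in> (\<Pi>\<^sub>E i\<in>Npos \<times> Npos. X i)"
        unfolding PiE_iff
      proof (intro conjI ballI)
        show "A \<in> extensional (Npos \<times> Npos)" using At by (simp add: PiE_iff)
        fix i assume i: "i \<in> Npos \<times> Npos"
        show "A i \<in> X i"
        proof (cases "X i = Npos")
          case True then show ?thesis using At i by (auto simp: PiE_iff)
        next
          case False then have "i \<in> F" using i by (simp add: F_def)
          then show ?thesis using A(3) X(1) i by (auto simp: PiE_iff)
        qed
      qed
      then show "\<exists>y. y \<in> Gspace \<inter> ?I \<and> y \<in> T" using A X(4) by blast
    qed
  qed
  moreover have "table_top closure_of (Gspace \<inter> ?I) \<subseteq> topspace table_top"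
    by (rule closure_of_subset_topspace)
  ultimately show ?thesis unfolding closure_of_subtopology by blast
qed

end
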